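(* Let $H=(T_1,\dots,T_n,p_1,\dots,p_n)$ be a strategic game with a belief structure satisfying properties A and B. Then for every relaxation $R$ of $\overline{LR}$, every $i\in[1..n]$, every ordinal $\alpha$, every $\mu_i\in\mathcal B_i\,\dot\cap\,R^{\alpha}$ and every $s_i\in T_i$: if $s_i\in BR_{R^{\alpha}}(\mu_i)$ then $s_i\in BR_H(\mu_i)$.
   Context: A strategic game $H=(T_1,\dots,T_n,p_1,\dots,p_n)$ has nonempty strategy sets $T_i$ and real payoffs. A restriction is $G=(S_1,\dots,S_n)$ with $S_i\subseteq T_i$ (possibly empty), ordered by componentwise inclusion (a complete lattice with top $H$). A belief structure gives each player $i$ a nonempty belief set $\mathcal B_i$, an expected payoff $p_i:T_i\times\mathcal B_i\to\mathbb R$, and for each restriction $G$ a set $\mathcal B_i\,\dot\cap\,G\subseteq\mathcal B_i$, with $\mathcal B_i\,\dot\cap\,H=\mathcal B_i$. Property A: $G_1\subseteq G_2\subseteq H$ implies $\mathcal B_i\,\dot\cap\,G_1\subseteq\mathcal B_i\,\dot\cap\,G_2$ for all $i$. Best response: for $G=(S_1,\dots,S_n)$, $s_i\in T_i$ is in $BR_G(\mu_i)$ iff $p_i(s_i,\mu_i)\ge p_i(s_i',\mu_i)$ for all $s_i'\in S_i$. Property B: for every $i$ and every $\mu_i\in\mathcal B_i$, $BR_H(\mu_i)\neq\emptyset$. The operator $LR$ maps $G$ to $(S_1',\dots,S_n')$ with $S_i':=\{s_i\in T_i\mid\exists\mu_i\in\mathcal B_i\,\dot\cap\,G:\ s_i\in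 BR_G(\mu_i)\}$, and $\overline{LR}(G):=LR(G)\cap G$. Iterations: $T^0:=H$, $T^{\alpha+1}:=T(T^\alpha)$, $T^\beta:=\bigcap_{\alpha<\beta}T^\alpha$ for limit $\beta$. $R$ is a relaxation of $T$ if for all ordinals $\alpha$: (1) $T(R^\alpha)\subseteq R(R^\alpha)$; (2) if $T(R^\alpha)\subseteq R^\alpha$ then $R(R^\alpha)\subseteq R^\alpha$; (3) if $R(R^\alpha)=R^\alpha$ then $T(R^\alpha)=R^\alpha$. *)

theory Defs
  imports Complex_Main
begin

text \<open>A restriction is a function G :: 'p \<Rightarrow> 's set with G i \<subseteq> T i; the order is the
pointwise (componentwise) inclusion order on functions.\<close>

definition is_restriction :: "('p \<Rightarrow> 's set) \<Rightarrow> ('p \<Rightarrow> 's set) \<Rightarrow> bool" where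
  "is_restriction T G \<longleftrightarrow> (\<forall>i. G i \<subseteq> T i)"

definition BR :: "('p \<Rightarrow> 's set) \<Rightarrow> ('p \<Rightarrow> 's \<Rightarrow> 'b \<Rightarrow> real) \<Rightarrow> ('p \<Rightarrow> 's set)
                  \<Rightarrow> 'p \<Rightarrow> 'b \<Rightarrow> 's set" where
  "BR T ep G i \<mu> = {s \<in> T i. \<forall>s' \<in> G i. ep i s \<mu> \<ge> ep i s' \<mu>}"

definition LR :: "('p \<Rightarrow> 's set) \<Rightarrow> ('p \<Rightarrow> 's \<Rightarrow> 'b \<Rightarrow> real) \<Rightarrow> ('p \<Rightarrow> ('p \<Rightarrow> 's set) \<Rightarrow> 'b set)
                  \<Rightarrow> ('p \<Rightarrow> 's set) \<Rightarrow> ('p \<Rightarrow> 's set)" where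
  "LR T ep bc G = (\<lambda>i. {s \<in> T i. \<exists>\<mu> \<in> bc i G. s \<in> BR T ep G i \<mu>})"

definition LRbar :: "('p \<Rightarrow> 's set) \<Rightarrow> ('p \<Rightarrow> 's \<Rightarrow> 'b \<Rightarrow> real) \<Rightarrow> ('p \<Rightarrow> ('p \<Rightarrow> 's set) \<Rightarrow> 'b set)
                  \<Rightarrow> ('p \<Rightarrow> 's set) \<Rightarrow> ('p \<Rightarrow> 's set)" where
  "LRbar T ep bc G = inf (LR T ep bc G) G"

text \<open>Transfinite iteration F^alpha starting from H, indexed by elements of a well-order
type 'o (playing the role of ordinals): F^0 = H, F^(beta+1) = F (F^beta), and at limits
F^lambda = the intersection of all earlier iterates.\<close>

definition is_succ_of :: "'o::wellorder \<Rightarrow> 'o \<Rightarrow> bool" where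
  "is_succ_of \<alpha> \<beta> \<longleftrightarrow> \<beta> < \<alpha> \<and> (\<forall>\<gamma>. \<beta> < \<gamma> \<longrightarrow> \<alpha> \<le> \<gamma>)"

definition titer :: "('p \<Rightarrow> 's set) \<Rightarrow> (('p \<Rightarrow> 's set) \<Rightarrow> ('p \<Rightarrow> 's set)) \<Rightarrow> 'o::wellorder
                     \<Rightarrow> ('p \<Rightarrow> 's set)" where
  "titer H F = wfrec {(x, y). x < y}
     (\<lambda>f \<alpha>. if \<not> (\<exists>\<beta>. \<beta> < \<alpha>) then H
            else if (\<exists>\<beta>. is_succ_of \<alpha> \<beta>) then F (f (THE \<beta>. is_succ_of \<alpha> \<beta>))
            else Inf (f ` {\<beta>. \<beta> < \<alpha>}))"

definition relaxation :: "'o::wellorder itself \<Rightarrow> ('p \<Rightarrow> 's set)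
      \<Rightarrow> (('p \<Rightarrow> 's set) \<Rightarrow> ('p \<Rightarrow> 's set)) \<Rightarrow> (('p \<Rightarrow> 's set) \<Rightarrow> ('p \<Rightarrow> 's set)) \<Rightarrow> bool" where
  "relaxation (_ :: 'o itself) H T R \<longleftrightarrow>
     (\<forall>\<alpha>::'o.
        T (titer H R \<alpha>) \<le> R (titer H R \<alpha>)
      \<and> (T (titer H R \<alpha>) \<le> titer H R \<alpha> \<longrightarrow> R (titer H R \<alpha>) \<le> titer H R \<alpha>)
      \<and> (R (titer H R \<alpha>) = titer H R \<alpha> \<longrightarrow> T (titer H R \<alpha>) = titer H R \<alpha>))"

end

theory Submission
  imports Defs
begin

lemma titer_unfold:
  "titer H F (\<alpha>::'o::wellorder) =
     (if \<not> (\<exists>\<beta>. \<beta> < \<alpha>) then H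
      else if (\<exists>\<beta>. is_succ_of \<alpha> \<beta>) then F (titer H F (THE \<beta>. is_succ_of \<alpha> \<beta>))
      else Inf (titer H F ` {\<beta>. \<beta> < \<alpha>}))"
proof -
  have the_lt: "(THE \<beta>. is_succ_of \<alpha> \<beta>) < \<alpha>" if "\<exists>\<beta>. is_succ_of \<alpha> \<beta>"
  proof -
    from that obtain \<beta> where b: "is_succ_of \<alpha> \<beta>" by blast
    have "\<exists>!\<beta>. is_succ_of \<alpha> \<beta>"
    proof (rule ex1I[where P="is_succ_of \<alpha>", OF b])
      fix y assume "is_succ_of \<alpha> y"
      with b show "y = \<beta>" unfolding is_succ_of_def
        by (meson antisym_conv3 not_le)
    qed
    hence "is_succ_of \<alpha> (THE \<beta>. is_succ_of \<alpha> \<beta>)" by (rule theI')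
    thus ?thesis by (simp add: is_succ_of_def)
  qed
  show ?thesis
    unfolding titer_def
    apply (subst wfrec[OF wellorder_class.wf])
    using the_lt by (auto simp: cut_apply image_def)
qed

lemma titer_zero: "\<not> (\<exists>\<beta>. \<beta> < \<alpha>) \<Longrightarrow> titer H F (\<alpha>::'o::wellorder) = H"
  by (subst titer_unfold) simp

lemma titer_succ: "is_succ_of \<alpha> \<beta> \<Longrightarrow> titer H F (\<alpha>::'o::wellorder) = F (titer H F \<beta>)"
proof -
  assume b: "is_succ_of \<alpha> \<beta>"
  have u: "\<And>y. is_succ_of \<alpha> y \<Longrightarrow> y = \<beta>"
    using b unfolding is_succ_of_def by (meson antisym_conv3 not_le)
  have "(THE \<beta>. is_succ_of \<alpha> \<beta>) = \<beta>" using b u by blast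
  moreover have "\<exists>\<beta>. \<beta> < \<alpha>" using b unfolding is_succ_of_def by blast
  ultimately show ?thesis using b by (subst titer_unfold) auto
qed

lemma titer_lim: "\<exists>\<beta>. \<beta> < \<alpha> \<Longrightarrow> \<not> (\<exists>\<beta>. is_succ_of \<alpha> \<beta>) \<Longrightarrow>
   titer H F (\<alpha>::'o::wellorder) = Inf (titer H F ` {\<beta>. \<beta> < \<alpha>})"
  by (subst titer_unfold) auto

theorem mainTheorem6:
  fixes T :: "'p::finite \<Rightarrow> 's set"
    and B :: "'p \<Rightarrow> 'b set"
    and ep :: "'p \<Rightarrow> 's \<Rightarrow> 'b \<Rightarrow> real"
    and bc :: "'p \<Rightarrow> ('p \<Rightarrow> 's set) \<Rightarrow> 'b set"
    and R :: "('p \<Rightarrow> 's set) \<Rightarrow> ('p \<Rightarrow> 's set)"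
    and \<alpha> :: "'o::wellorder"
  assumes T_ne: "\<forall>i. T i \<noteq> {}"
    and B_ne: "\<forall>i. B i \<noteq> {}"
    and bc_sub: "\<forall>i G. is_restriction T G \<longrightarrow> bc i G \<subseteq> B i"
    and bc_top: "\<forall>i. bc i T = B i"
    and propA: "\<forall>G1 G2. G1 \<le> G2 \<and> G2 \<le> T \<longrightarrow> (\<forall>i. bc i G1 \<subseteq> bc i G2)"
    and propB: "\<forall>i. \<forall>\<mu> \<in> B i. BR T ep T i \<mu> \<noteq> {}"
    and relax: "relaxation TYPE('o) T (LRbar T ep bc) R"
    and mu: "\<mu> \<in> bc i (titer T R \<alpha>)"
    and s: "s \<in> BR T ep (titer T R \<alpha>) i \<mu>"
  shows "s \<in> BR T ep T i \<mu>"
proof -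
  let ?X = "titer T R :: 'o \<Rightarrow> _"
  have dec: "R (?X \<beta>) \<le> ?X \<beta>" for \<beta>
  proof -
    have "LRbar T ep bc (?X \<beta>) \<le> R (?X \<beta>)"
      "LRbar T ep bc (?X \<beta>) \<le> ?X \<beta> \<longrightarrow> R (?X \<beta>) \<le> ?X \<beta>"
      using relax unfolding relaxation_def by blast+
    moreover have "LRbar T ep bc (?X \<beta>) \<le> ?X \<beta>" unfolding LRbar_def by simp
    ultimately show ?thesis by blast
  qed
  have main: "?X \<gamma> \<le> T \<and> (\<forall>j \<nu>. \<nu> \<in> bc j (?X \<gamma>) \<longrightarrow> BR T ep T j \<nu> \<subseteq> ?X \<gamma> j)" for \<gamma>
  proof (induction \<gamma> rule: less_induct)
    case (less \<gamma>)
    show ?case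
    proof (cases "\<exists>\<beta>. \<beta> < \<gamma>")
      case False
      then show ?thesis using titer_zero[OF False, of T R] by (auto simp: BR_def)
    next
      case True
      note ex = True
      show ?thesis
      proof (cases "\<exists>\<beta>. is_succ_of \<gamma> \<beta>")
        case True
        then obtain \<beta> where b: "is_succ_of \<gamma> \<beta>" by blast
        hence lt: "\<beta> < \<gamma>" by (simp add: is_succ_of_def)
        have eq: "?X \<gamma> = R (?X \<beta>)" using titer_succ[OF b] .
        have IH: "?X \<beta> \<le> T" "\<And>j \<nu>. \<nu> \<in> bc j (?X \<beta>) \<Longrightarrow> BR T ep T j \<nu> \<subseteq> ?X \<beta> j"
          using less[OF lt] by blast+
        have sub: "?X \<gamma> \<le> ?X \<beta>" using eq dec by simp
        have "?X \<gamma> \<le> T" using sub IH(1) by (rule order_trans)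
        moreover have "BR T ep T j \<nu> \<subseteq> ?X \<gamma> j" if nu: "\<nu> \<in> bc j (?X \<gamma>)" for j \<nu>
        proof
          fix t assume t: "t \<in> BR T ep T j \<nu>"
          have nu': "\<nu> \<in> bc j (?X \<beta>)" using propA sub IH(1) nu by blast
          have tb: "t \<in> ?X \<beta> j" using IH(2)[OF nu'] t by blast
          have "?X \<beta> j \<subseteq> T j" using IH(1) by (simp add: le_fun_def)
          hence "t \<in> BR T ep (?X \<beta>) j \<nu>" using t by (auto simp: BR_def)
          hence "t \<in> LRbar T ep bc (?X \<beta>) j" using nu' tb t
            by (auto simp: LRbar_def LR_def BR_def)
          moreover have "LRbar T ep bc (?X \<beta>) \<le> R (?X \<beta>)"
            using relax unfolding relaxation_def by blast
          ultimately show "t \<in> ?X \<gamma> j" using eq by (auto simp: le_fun_def)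
        qed
        ultimately show ?thesis by blast
      next
        case False
        have eq: "?X \<gamma> = Inf (?X ` {\<beta>. \<beta> < \<gamma>})" using titer_lim[OF ex False] .
        have le: "?X \<gamma> \<le> ?X \<beta>" if "\<beta> < \<gamma>" for \<beta>
          unfolding eq using that by (auto intro: Inf_lower)
        from ex obtain \<beta>0 where b0: "\<beta>0 < \<gamma>" by blast
        have "?X \<gamma> \<le> T" using le[OF b0] less[OF b0] by (blast intro: order_trans)
        moreover have "BR T ep T j \<nu> \<subseteq> ?X \<gamma> j" if nu: "\<nu> \<in> bc j (?X \<gamma>)" for j \<nu>
        proof
          fix t assume t: "t \<in> BR T ep T j \<nu>"
          have "t \<in> ?X \<beta> j" if lt: "\<beta> < \<gamma>" for \<beta>
          proof -
            have "?X \<beta> \<le> T" using less[OF lt] by blast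
            hence "\<nu> \<in> bc j (?X \<beta>)" using propA le[OF lt] nu by blast
            thus ?thesis using less[OF lt] t by blast
          qed
          thus "t \<in> ?X \<gamma> j" unfolding eq by (auto simp: Inf_apply)
        qed
        ultimately show ?thesis by blast
      qed
    qed
  qed
  have XT: "?X \<alpha> \<le> T" and inc: "BR T ep T i \<mu> \<subseteq> ?X \<alpha> i" using main mu by blast+
  have "is_restriction T (?X \<alpha>)" using XT by (simp add: is_restriction_def le_fun_def)
  hence "\<mu> \<in> B i" using bc_sub mu by blast
  then obtain t where t: "t \<in> BR T ep T i \<mu>" using propB by blast
  have "t \<in> ?X \<alpha> i" using inc t by blast
  hence "ep i s \<mu> \<ge> ep i t \<mu>" using s by (simp add: BR_def)
  with t s show ?thesis unfolding BR_def by force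
qed

end
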